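(* Let $P$ be a simple $d$-polytope. (1) If $v$ is a vertex of $P$ then the interval $[P,v]=\{f\in\mathscr F(P): P\le f\le v\}$ is a Boolean lattice of rank $d$; in particular, facets $f_1,\dots,f_k$ with $\bigvee f_i<\varnothing$ are independent. (2) If $P$ is the $d$-cube or the $d$-permutohedron and $f_1,\dots,f_k\in\mathscr F(P)$ are independent facets with $\bigvee f_i=\varnothing$, then $k\le2$.
   Context: $\mathscr F(P)$ is the set of faces of the convex polytope $P$ (including $P$ and $\varnothing$) ordered by reverse inclusion, so $f_1\vee f_2=f_1\cap f_2$, the least element is $P$ and the greatest is $\varnothing$; the atoms are the facets. A $d$-polytope is simple if every vertex lies in exactly $d$ facets. A set $S$ of facets is independent if $\bigvee(S\setminus\{s\})<\bigvee S$ (i.e. $\bigcap(S\setminus\{s\})\supsetneq\bigcap S$) for every $s\in S$. The $d$-cube is the convex hull of $\{\sum_i\varepsilon_iv_i:\varepsilon_i=\pm1\}\subset\mathbb R^d$; the $d$-permutohedron is the convex hull of $\{\sum_i m_{i\pi}v_i:\pi\in\mathfrak S_{d+1}\}\subset\mathbb R^{d+1}$ for fixed integers $0\le m_1<\dots<m_{d+1}$. The Boolean lattice of rank $d$ is the lattice of subsets of a $d$-set. *)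

theory Defs
  imports "HOL-Analysis.Analysis"
begin

text \<open>Face lattice F(P) ordered by reverse inclusion: the join of a set S of faces
  is their intersection (taken inside P, so that the empty join is P, the least element).\<close>
definition face_join :: "'a::euclidean_space set \<Rightarrow> 'a set set \<Rightarrow> 'a set" where
  "face_join P S = P \<inter> \<Inter>S"

definition independent_facets :: "'a::euclidean_space set \<Rightarrow> 'a set set \<Rightarrow> bool" where
  "independent_facets P S \<longleftrightarrow>
     (\<forall>F\<in>S. F facet_of P) \<and> (\<forall>s\<in>S. face_join P S \<subset> face_join P (S - {s}))"

definition simple_polytope :: "nat \<Rightarrow> 'a::euclidean_space set \<Rightarrow> bool" where
  "simple_polytope d P \<longleftrightarrow> polytope P \<and> aff_dim P = int d \<and>
     (\<forall>v. {v} face_of P \<longrightarrow> card {F. F facet_of P \<and> v \<in> F} = d)"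

text \<open>The interval [P, v] of the face lattice: faces f with P \<le> f \<le> {v}, i.e. faces containing v.\<close>
definition face_interval :: "'a::euclidean_space set \<Rightarrow> 'a \<Rightarrow> 'a set set" where
  "face_interval P v = {F. F face_of P \<and> {v} \<subseteq> F}"

definition boolean_lattice_of_rank :: "'a set set \<Rightarrow> nat \<Rightarrow> bool" where
  "boolean_lattice_of_rank L d \<longleftrightarrow>
     (\<exists>(A::nat set) \<phi>. finite A \<and> card A = d \<and> bij_betw \<phi> L (Pow A) \<and>
        (\<forall>F\<in>L. \<forall>G\<in>L. G \<subseteq> F \<longleftrightarrow> \<phi> F \<subseteq> \<phi> G))"

text \<open>The d-cube in R^d, d = CARD('n), v_i the standard basis vectors.\<close>
definition cube :: "(real^'n) set" where
  "cube = convex hull {(\<Sum>i\<in>UNIV. \<epsilon> i *\<^sub>R axis i 1) | \<epsilon>. \<forall>i. \<epsilon> i = 1 \<or> \<epsilon> i = -1}"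

text \<open>The permutohedron in R^(d+1), d + 1 = CARD('n), for a labelling m of the
  d+1 distinct nonnegative integers m_1 < ... < m_(d+1) by the coordinates.\<close>
definition permutohedron :: "('n \<Rightarrow> int) \<Rightarrow> (real^'n) set" where
  "permutohedron m = convex hull
     {(\<Sum>i\<in>UNIV. of_int (m (\<pi> i)) *\<^sub>R axis i 1) | \<pi>. \<pi> permutes (UNIV :: 'n set)}"

end

theory Submission
  imports Defs
begin


lemma facet_hyp_inj:
  fixes P :: "'a::euclidean_space set"
  assumes fin: "finite H" and Adef: "A = affine hull P" and seq: "P = A \<inter> \<Inter>H"
    and ab: "\<And>h. h\<in>H \<Longrightarrow> a h \<noteq> 0 \<and> h = {x. a h \<bullet> x \<le> b h}"
    and psub: "\<And>H'. H' \<subset> H \<Longrightarrow> P \<subset> A \<inter> \<Inter>H'"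
    and h1: "h1\<in>H" and h2: "h2\<in>H"
    and eq: "P \<inter> {x. a h1 \<bullet> x = b h1} = P \<inter> {x. a h2 \<bullet> x = b h2}"
  shows "h1 = h2"
proof (rule ccontr)
  have memH: "x \<in> h \<longleftrightarrow> a h \<bullet> x \<le> b h" if "h \<in> H" for h x
    using ab[OF that] by blast
  assume ne: "h1 \<noteq> h2"
  have "H - {h1} \<subset> H" using h1 by blast
  from psub[OF this] obtain x where xA: "x \<in> A" and xH: "x \<in> \<Inter>(H - {h1})" and xP: "x \<notin> P"
    by blast
  have seq': "P = affine hull P \<inter> \<Inter>H" using seq Adef by simp
  have psub': "\<And>H'. H' \<subset> H \<Longrightarrow> P \<subset> affine hull P \<inter> \<Inter>H'" using psub Adef by simp
  have "P \<noteq> {}" using xA Adef by auto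
  have "polyhedron P"
    unfolding polyhedron_Int_affine using fin seq' ab by metis
  then have "convex P" by (rule polyhedron_imp_convex)
  with \<open>P \<noteq> {}\<close> have "rel_interior P \<noteq> {}" by (simp add: rel_interior_eq_empty)
  then obtain y where yr: "y \<in> rel_interior P" by auto
  have rels: "rel_interior P = {x \<in> P. \<forall>h\<in>H. a h \<bullet> x < b h}"
    by (rule rel_interior_polyhedron_explicit [OF fin seq' ab psub'])
  with yr have yP: "y \<in> P" and ylt: "\<And>h. h \<in> H \<Longrightarrow> a h \<bullet> y < b h" by auto
  have PA: "A \<inter> \<Inter>H \<subseteq> P" using seq by (rule equalityD2)
  have xgt: "a h1 \<bullet> x > b h1"
  proof (rule ccontr)
    assume "\<not> a h1 \<bullet> x > b h1"
    then have "x \<in> h1" using memH[OF h1] by auto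
    with xH have "x \<in> \<Inter>H" by blast
    with xA PA xP show False by blast
  qed
  define t where "t = (b h1 - a h1 \<bullet> y) / (a h1 \<bullet> x - a h1 \<bullet> y)"
  have y1: "a h1 \<bullet> y < b h1" using ylt h1 by blast
  have dpos: "a h1 \<bullet> x - a h1 \<bullet> y > 0" using xgt y1 by linarith
  have t0: "0 < t" unfolding t_def using dpos y1 by (intro divide_pos_pos) auto
  have "b h1 - a h1 \<bullet> y < a h1 \<bullet> x - a h1 \<bullet> y" using xgt by linarith
  then have t1: "t < 1" unfolding t_def by (simp only: divide_less_eq_1_pos[OF dpos])
  define z where "z = (1 - t) *\<^sub>R y + t *\<^sub>R x"
  have yA: "y \<in> A" unfolding Adef using yP by (rule hull_inc)
  have zA: "z \<in> A"
    unfolding z_def using yA xA unfolding Adef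
    by (intro mem_affine affine_affine_hull) auto
  have za: "a h \<bullet> z = (1 - t) * (a h \<bullet> y) + t * (a h \<bullet> x)" for h
    by (simp add: z_def inner_add_right)
  have tm: "t * (a h1 \<bullet> x - a h1 \<bullet> y) = b h1 - a h1 \<bullet> y"
    using dpos unfolding t_def by simp
  have z1: "a h1 \<bullet> z = b h1"
    unfolding za using tm by (simp add: algebra_simps)
  have zH: "z \<in> h" if "h \<in> H" for h
  proof (cases "h = h1")
    case True then show ?thesis using z1 memH[OF h1] by simp
  next
    case False
    then have "x \<in> h" using xH that by blast
    then have "a h \<bullet> x \<le> b h" using memH[OF that] by auto
    moreover have "a h \<bullet> y \<le> b h" using ylt[OF that] by simp
    ultimately have "(1 - t) * (a h \<bullet> y) + t * (a h \<bullet> x) \<le> (1 - t) * b h + t * b h"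
      using t0 t1 by (intro add_mono mult_left_mono) auto
    then have "a h \<bullet> z \<le> b h" unfolding za by (simp add: algebra_simps)
    then show ?thesis using memH[OF that] by simp
  qed
  have zP: "z \<in> P" using zA zH PA by blast
  with z1 eq have z2: "a h2 \<bullet> z = b h2" by blast
  have "x \<in> h2" using xH h2 ne by blast
  then have "a h2 \<bullet> x \<le> b h2" using memH[OF h2] by auto
  moreover have "a h2 \<bullet> y < b h2" using ylt[OF h2] .
  ultimately have "(1 - t) * (a h2 \<bullet> y) + t * (a h2 \<bullet> x) < (1 - t) * b h2 + t * b h2"
    using t0 t1 by (intro add_less_le_mono mult_strict_left_mono mult_left_mono) auto
  with z2 za show False by (simp add: algebra_simps)
qed


lemma simple_local:
  fixes P :: "'a::euclidean_space set"
  assumes simple: "simple_polytope d P" and vert: "{v} face_of P"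
    and TF: "T \<subseteq> {F. F facet_of P \<and> v \<in> F}" and G: "G facet_of P" "v \<in> G" "G \<notin> T"
  shows "\<not> (P \<inter> \<Inter>T \<subseteq> G)"
proof -
  have polyP: "polytope P" and dimP: "aff_dim P = int d"
    and cardv: "card {F. F facet_of P \<and> v \<in> F} = d"
    using simple vert unfolding simple_polytope_def by auto
  have "polyhedron P" using polyP by (rule polytope_imp_polyhedron)
  then obtain H where fin: "finite H" and seq': "P = affine hull P \<inter> \<Inter>H"
    and faces: "\<And>h. h \<in> H \<Longrightarrow> \<exists>a b. a \<noteq> 0 \<and> h = {x. a \<bullet> x \<le> b}"
    and min': "\<And>H'. H' \<subset> H \<Longrightarrow> P \<subset> (affine hull P) \<inter> \<Inter>H'"
    by (simp add: polyhedron_Int_affine_minimal) meson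
  then obtain a b where ab: "\<And>h. h \<in> H \<Longrightarrow> a h \<noteq> 0 \<and> h = {x. a h \<bullet> x \<le> b h}"
    by metis
  have memH: "x \<in> h \<longleftrightarrow> a h \<bullet> x \<le> b h" if "h \<in> H" for h x
    using ab[OF that] by blast
  have anz: "a h \<noteq> 0" if "h \<in> H" for h using ab[OF that] by blast
  define A where "A = affine hull P"
  have seq: "P = A \<inter> \<Inter>H" using seq' A_def by simp
  have psub: "\<And>H'. H' \<subset> H \<Longrightarrow> P \<subset> A \<inter> \<Inter>H'" using min' A_def by simp
  have PA: "A \<inter> \<Inter>H \<subseteq> P" using seq by (rule equalityD2)
  have PA2: "P \<subseteq> A \<inter> \<Inter>H" using seq by (rule equalityD1)
  have affA: "affine A" unfolding A_def by simp
  have facet_iff: "C facet_of P \<longleftrightarrow> (\<exists>h. h \<in> H \<and> C = P \<inter> {x. a h \<bullet> x = b h})" for C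
    by (rule facet_of_polyhedron_explicit[OF fin seq' ab min'])
  have vP: "v \<in> P" using vert face_of_imp_subset by blast
  have vA: "v \<in> A" unfolding A_def using vP by (rule hull_inc)
  define Hv where "Hv = {h\<in>H. a h \<bullet> v = b h}"
  have HvH: "Hv \<subseteq> H" unfolding Hv_def by blast
  have vle: "a h \<bullet> v \<le> b h" if "h \<in> H" for h
    using PA2 vP that memH by blast
  have vlt: "a h \<bullet> v < b h" if "h \<in> H - Hv" for h
    using vle[of h] that unfolding Hv_def by force
  let ?E = "\<lambda>h. P \<inter> {x. a h \<bullet> x = b h}"
  have Fv: "{F. F facet_of P \<and> v \<in> F} = ?E ` Hv"
  proof
    show "{F. F facet_of P \<and> v \<in> F} \<subseteq> ?E ` Hv"
    proof
      fix F assume "F \<in> {F. F facet_of P \<and> v \<in> F}"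
      then have "F facet_of P" "v \<in> F" by auto
      then obtain h where "h \<in> H" "F = ?E h" using facet_iff[THEN iffD1, OF \<open>F facet_of P\<close>] by blast
      with \<open>v \<in> F\<close> have "h \<in> Hv" unfolding Hv_def by blast
      with \<open>F = ?E h\<close> show "F \<in> ?E ` Hv" by blast
    qed
  next
    show "?E ` Hv \<subseteq> {F. F facet_of P \<and> v \<in> F}"
      using facet_iff HvH vP unfolding Hv_def by blast
  qed
  have injE: "inj_on ?E Hv"
  proof (rule inj_onI)
    fix h1 h2 assume "h1 \<in> Hv" "h2 \<in> Hv" "?E h1 = ?E h2"
    then show "h1 = h2"
      using facet_hyp_inj[OF fin A_def seq ab psub] HvH by blast
  qed
  have cardHv: "card Hv = d" using cardv Fv card_image[OF injE] by simp
  have finHv: "finite Hv" using fin HvH finite_subset by blast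
  define M where "M T = A \<inter> \<Inter>((\<lambda>h. {x. a h \<bullet> x = b h}) ` T)" for T
  have memM: "x \<in> M T \<longleftrightarrow> x \<in> A \<and> (\<forall>h\<in>T. a h \<bullet> x = b h)" for x T
    unfolding M_def by blast
  have affM: "affine (M T)" for T
    unfolding M_def by (intro affine_Int affA affine_Inter) (auto intro: affine_hyperplane)
  have vM: "v \<in> M T" if "T \<subseteq> Hv" for T
    using that vA unfolding memM Hv_def by blast
  have dimM: "aff_dim (M T) \<ge> int d - int (card T)" if "finite T" "T \<subseteq> Hv" for T
    using that
  proof (induction T rule: finite_induct)
    case empty
    have "M {} = A" unfolding M_def by simp
    then show ?case using dimP unfolding A_def by simp
  next
    case (insert h T)
    have eq: "M (insert h T) = M T \<inter> {x. a h \<bullet> x = b h}" unfolding M_def by auto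
    have ne: "M T \<inter> {x. a h \<bullet> x = b h} \<noteq> {}"
      using vM[of "insert h T"] insert.prems eq by auto
    have "aff_dim (M (insert h T)) \<ge> aff_dim (M T) - 1"
      unfolding eq aff_dim_affine_Int_hyperplane[OF affM] using ne by auto
    moreover have "aff_dim (M T) \<ge> int d - int (card T)" using insert by auto
    ultimately show ?case using insert.hyps by simp
  qed
  have move: "\<exists>t>0. \<forall>h\<in>H-Hv. a h \<bullet> (v + t *\<^sub>R (w - v)) < b h" for w
  proof -
    have "\<forall>\<^sub>F t in at_right 0. \<forall>h\<in>H-Hv. a h \<bullet> (v + t *\<^sub>R (w - v)) < b h"
    proof (intro eventually_ball_finite ballI)
      show "finite (H - Hv)" using fin by simp
      fix h assume h: "h \<in> H - Hv"
      have "((\<lambda>t. a h \<bullet> v + t * (a h \<bullet> (w - v))) \<longlongrightarrow> a h \<bullet> v + 0 * (a h \<bullet> (w - v))) (at_right 0)"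
        by (intro tendsto_intros)
      then have "((\<lambda>t. a h \<bullet> (v + t *\<^sub>R (w - v))) \<longlongrightarrow> a h \<bullet> v) (at_right 0)"
        by (simp add: inner_add_right)
      then show "\<forall>\<^sub>F t in at_right 0. a h \<bullet> (v + t *\<^sub>R (w - v)) < b h"
        using vlt[OF h] by (rule order_tendstoD(2))
    qed
    then obtain c where "c > 0" and c: "\<And>y. y > 0 \<Longrightarrow> y < c \<Longrightarrow> \<forall>h\<in>H-Hv. a h \<bullet> (v + y *\<^sub>R (w - v)) < b h"
      unfolding eventually_at_right_field by auto
    show ?thesis using c[of "c/2"] \<open>c > 0\<close> by (intro exI[of _ "c/2"]) auto
  qed
  have zP: "z \<in> P" if "z \<in> A" "\<And>h. h \<in> Hv \<Longrightarrow> a h \<bullet> z \<le> b h" "\<And>h. h \<in> H - Hv \<Longrightarrow> a h \<bullet> z < b h" for z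
  proof -
    have "z \<in> h" if "h \<in> H" for h
    proof (cases "h \<in> Hv")
      case True then show ?thesis using \<open>\<And>h. h \<in> Hv \<Longrightarrow> a h \<bullet> z \<le> b h\<close> memH[OF \<open>h \<in> H\<close>] by blast
    next
      case False then show ?thesis using \<open>\<And>h. h \<in> H - Hv \<Longrightarrow> a h \<bullet> z < b h\<close> memH[OF \<open>h \<in> H\<close>] that
        by (meson DiffI less_imp_le)
    qed
    then show ?thesis using PA \<open>z \<in> A\<close> by blast
  qed
  have segM: "v + t *\<^sub>R (w - v) \<in> M T" if "v \<in> M T" "w \<in> M T" for t w T
  proof -
    have "(1 - t) *\<^sub>R v + t *\<^sub>R w \<in> M T" by (rule mem_affine[OF affM that]) simp
    moreover have "(1 - t) *\<^sub>R v + t *\<^sub>R w = v + t *\<^sub>R (w - v)" by (simp add: algebra_simps)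
    ultimately show ?thesis by simp
  qed
  have Mv: "M Hv = {v}"
  proof (cases "P = {v}")
    case True
    then have "A = {v}" unfolding A_def by simp
    then show ?thesis using vM[of Hv] unfolding M_def by auto
  next
    case False
    have vint: "{v} = \<Inter>{F. F facet_of P \<and> {v} \<subseteq> F}"
      by (rule face_of_polyhedron[OF \<open>polyhedron P\<close> vert]) (use False in auto)
    show ?thesis
    proof (rule ccontr)
      assume "M Hv \<noteq> {v}"
      then obtain w where wM: "w \<in> M Hv" and wv: "w \<noteq> v" using vM[of Hv] by blast
      obtain t where t0: "t > 0" and tl: "\<forall>h\<in>H-Hv. a h \<bullet> (v + t *\<^sub>R (w - v)) < b h"
        using move by blast
      define z where "z = v + t *\<^sub>R (w - v)"
      have zM: "z \<in> M Hv" unfolding z_def by (rule segM[OF vM[OF order_refl] wM])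
      have zzP: "z \<in> P"
      proof (rule zP)
        show "z \<in> A" using zM unfolding memM by blast
        show "a h \<bullet> z \<le> b h" if "h \<in> Hv" for h using zM that unfolding memM by simp
        show "a h \<bullet> z < b h" if "h \<in> H - Hv" for h using tl that unfolding z_def by blast
      qed
      have "z \<in> F" if FP: "F facet_of P" and vF: "{v} \<subseteq> F" for F
      proof -
        obtain h where "h \<in> H" "F = ?E h" using facet_iff[THEN iffD1, OF FP] by blast
        with vF have "h \<in> Hv" unfolding Hv_def by blast
        then show ?thesis using zM zzP \<open>F = ?E h\<close> unfolding memM by blast
      qed
      then have "z \<in> {v}" using vint by blast
      then have "t *\<^sub>R (w - v) = 0" unfolding z_def by simp
      with t0 wv show False by simp
    qed
  qed
  obtain h0 where h0: "h0 \<in> H" "G = ?E h0" using facet_iff[THEN iffD1, OF G(1)] by blast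
  with G have h0v: "h0 \<in> Hv" unfolding Hv_def by blast
  define T0 where "T0 = Hv - {h0}"
  have cT0: "card T0 = d - 1" unfolding T0_def using cardHv h0v finHv by simp
  have d1: "d \<ge> 1" using cardHv h0v finHv card_0_eq[of Hv] by (cases d) auto
  have "aff_dim (M T0) \<ge> 1"
    using dimM[of T0] cT0 d1 finHv unfolding T0_def by auto
  then have "M T0 \<noteq> {v}" by auto
  then obtain w where wM: "w \<in> M T0" and wv: "w \<noteq> v"
    using vM[of T0] unfolding T0_def by blast
  have "a h0 \<bullet> w \<noteq> b h0"
  proof
    assume "a h0 \<bullet> w = b h0"
    then have "w \<in> M Hv" using wM h0v unfolding memM T0_def by blast
    with Mv wv show False by blast
  qed
  obtain w' where w'M: "w' \<in> M T0" and w'lt: "a h0 \<bullet> w' < b h0"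
  proof (cases "a h0 \<bullet> w < b h0")
    case True then show ?thesis using that wM by blast
  next
    case False
    with \<open>a h0 \<bullet> w \<noteq> b h0\<close> have gt: "a h0 \<bullet> w > b h0" by simp
    have "2 *\<^sub>R v + (-1) *\<^sub>R w \<in> M T0"
      by (rule mem_affine[OF affM vM wM]) (auto simp: T0_def)
    moreover have "a h0 \<bullet> (2 *\<^sub>R v + (-1) *\<^sub>R w) < b h0"
      using gt h0v unfolding Hv_def by (simp add: inner_diff_right)
    ultimately show ?thesis using that by blast
  qed
  obtain t where t0: "t > 0" and tl: "\<forall>h\<in>H-Hv. a h \<bullet> (v + t *\<^sub>R (w' - v)) < b h"
    using move by blast
  define z where "z = v + t *\<^sub>R (w' - v)"
  have zM: "z \<in> M T0" unfolding z_def by (rule segM[OF vM w'M]) (auto simp: T0_def)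
  have zh0: "a h0 \<bullet> z < b h0"
  proof -
    have "a h0 \<bullet> z = a h0 \<bullet> v + t * (a h0 \<bullet> w' - a h0 \<bullet> v)"
      unfolding z_def by (simp add: inner_add_right inner_diff_right)
    moreover have "a h0 \<bullet> v = b h0" using h0v unfolding Hv_def by blast
    moreover have "t * (a h0 \<bullet> w' - b h0) < 0" using t0 w'lt by (simp add: mult_pos_neg)
    ultimately show ?thesis by simp
  qed
  have zzP: "z \<in> P"
  proof (rule zP)
    show "z \<in> A" using zM unfolding memM by blast
    show "a h \<bullet> z \<le> b h" if "h \<in> Hv" for h
    proof (cases "h = h0")
      case True then show ?thesis using zh0 by simp
    next
      case False then show ?thesis using zM that unfolding memM T0_def by simp
    qed
    show "a h \<bullet> z < b h" if "h \<in> H - Hv" for h using tl that unfolding z_def by blast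
  qed
  have "z \<in> F" if "F \<in> T" for F
  proof -
    have "F facet_of P" "v \<in> F" using TF that by auto
    then obtain h where "h \<in> H" "F = ?E h" using facet_iff[THEN iffD1, OF \<open>F facet_of P\<close>] by blast
    with \<open>v \<in> F\<close> have "h \<in> Hv" unfolding Hv_def by blast
    moreover have "h \<noteq> h0" using \<open>F = ?E h\<close> h0 that G(3) by blast
    ultimately show ?thesis using zM zzP \<open>F = ?E h\<close> unfolding memM T0_def by blast
  qed
  moreover have "z \<notin> G" using h0 zh0 by simp
  ultimately show ?thesis using zzP by blast
qed

lemma face_has_vertex:
  fixes P :: "'a::euclidean_space set"
  assumes "polytope P" "C face_of P" "C \<noteq> {}"
  obtains v where "{v} face_of P" "v \<in> C"
proof -
  have "compact C" using face_of_imp_compact assms polytope_imp_compact polytope_imp_convex by blast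
  moreover have "convex C" using assms face_of_imp_convex by blast
  ultimately obtain x where "x extreme_point_of C" using extreme_point_exists_convex assms(3) by blast
  then have "x extreme_point_of P" "x \<in> C" using extreme_point_of_face[OF assms(2)] by auto
  then show ?thesis using that face_of_singleton by blast
qed

lemma face_join_face:
  fixes P :: "'a::euclidean_space set"
  assumes "convex P" "\<forall>F\<in>S. F face_of P"
  shows "face_join P S face_of P"
proof -
  have "\<Inter>(insert P S) face_of P"
    by (rule face_of_Inter) (use assms face_of_refl in auto)
  then show ?thesis unfolding face_join_def by simp
qed

lemma part2:
  fixes P :: "'a::euclidean_space set"
  assumes simple: "simple_polytope d P" and SF: "\<forall>F\<in>S. F facet_of P" and ne: "face_join P S \<noteq> {}"
  shows "independent_facets P S"
proof -
  have polyP: "polytope P" using simple unfolding simple_polytope_def by auto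
  have "face_join P S face_of P"
    using face_join_face polytope_imp_convex[OF polyP] SF facet_of_imp_face_of by blast
  then obtain v where v: "{v} face_of P" "v \<in> face_join P S"
    using face_has_vertex[OF polyP _ ne] by blast
  have "face_join P S \<subset> face_join P (S - {s})" if s: "s \<in> S" for s
  proof -
    have TF: "S - {s} \<subseteq> {F. F facet_of P \<and> v \<in> F}" using SF v unfolding face_join_def by auto
    have "\<not> (P \<inter> \<Inter>(S - {s}) \<subseteq> s)"
      by (rule simple_local[OF simple v(1) TF]) (use SF s v in \<open>auto simp: face_join_def\<close>)
    then show ?thesis using s unfolding face_join_def by blast
  qed
  then show ?thesis using SF unfolding independent_facets_def by blast
qed

lemma face_rep:
  fixes P :: "'a::euclidean_space set"
  assumes "polytope P" "F face_of P" "F \<noteq> {}"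
  shows "F = P \<inter> \<Inter>{G. G facet_of P \<and> F \<subseteq> G}"
proof (cases "F = P")
  case True
  have "{G. G facet_of P \<and> F \<subseteq> G} = {}"
  proof (rule equals0I)
    fix G assume "G \<in> {G. G facet_of P \<and> F \<subseteq> G}"
    then have "G facet_of P" "P \<subseteq> G" using True by auto
    then have "G = P" using facet_of_imp_subset by blast
    with \<open>G facet_of P\<close> show False by simp
  qed
  then show ?thesis using True by (simp only: Inter_empty) simp
next
  case False
  have "F = \<Inter>{G. G facet_of P \<and> F \<subseteq> G}"
    by (rule face_of_polyhedron) (use assms False polytope_imp_polyhedron in auto)
  then show ?thesis using face_of_imp_subset[OF assms(2)] by blast
qed

lemma part1:
  fixes P :: "'a::euclidean_space set"
  assumes simple: "simple_polytope d P" and vert: "{v} face_of P"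
  shows "boolean_lattice_of_rank (face_interval P v) d"
proof -
  have polyP: "polytope P" and cardv: "card {F. F facet_of P \<and> v \<in> F} = d"
    using simple vert unfolding simple_polytope_def by auto
  define Fv where "Fv = {F. F facet_of P \<and> v \<in> F}"
  have finFv: "finite Fv" unfolding Fv_def
    by (rule finite_subset[OF _ finite_polytope_facets[OF polyP]]) blast
  have cFv: "card Fv = d" using cardv Fv_def by simp
  obtain g where g: "bij_betw g Fv {0..<d}" using ex_bij_betw_finite_nat[OF finFv] cFv by auto
  define L where "L = face_interval P v"
  define \<psi> where "\<psi> F = {G. G facet_of P \<and> F \<subseteq> G}" for F
  have memL: "F \<in> L \<longleftrightarrow> F face_of P \<and> v \<in> F" for F unfolding L_def face_interval_def by simp
  have rep: "F = P \<inter> \<Inter>(\<psi> F)" if "F \<in> L" for F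
    unfolding \<psi>_def by (rule face_rep[OF polyP]) (use that memL in auto)
  have psiFv: "\<psi> F \<subseteq> Fv" if "F \<in> L" for F
    using that memL unfolding \<psi>_def Fv_def by auto
  have ord: "G \<subseteq> F \<longleftrightarrow> \<psi> F \<subseteq> \<psi> G" if "F \<in> L" "G \<in> L" for F G
  proof
    assume "G \<subseteq> F" then show "\<psi> F \<subseteq> \<psi> G" unfolding \<psi>_def by auto
  next
    assume "\<psi> F \<subseteq> \<psi> G"
    then have "P \<inter> \<Inter>(\<psi> G) \<subseteq> P \<inter> \<Inter>(\<psi> F)" by blast
    then show "G \<subseteq> F" using rep[OF that(1)] rep[OF that(2)] by simp
  qed
  have bpsi: "bij_betw \<psi> L (Pow Fv)"
  proof (rule bij_betwI')
    fix F G assume "F \<in> L" "G \<in> L"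
    then show "(\<psi> F = \<psi> G) = (F = G)" using ord by blast
  next
    fix F assume "F \<in> L" then show "\<psi> F \<in> Pow Fv" using psiFv by blast
  next
    fix T assume "T \<in> Pow Fv"
    then have TF: "T \<subseteq> Fv" by blast
    define F where "F = P \<inter> \<Inter>T"
    have "F = face_join P T" unfolding F_def face_join_def by simp
    moreover have "face_join P T face_of P"
      using face_join_face polytope_imp_convex[OF polyP] TF facet_of_imp_face_of unfolding Fv_def by blast
    ultimately have FP: "F face_of P" by simp
    have vF: "v \<in> F" unfolding F_def using TF vert face_of_imp_subset unfolding Fv_def by auto
    have "\<psi> F = T"
    proof
      show "T \<subseteq> \<psi> F" using TF unfolding \<psi>_def F_def Fv_def by auto
      show "\<psi> F \<subseteq> T"
      proof
        fix G assume "G \<in> \<psi> F"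
        then have G: "G facet_of P" "F \<subseteq> G" unfolding \<psi>_def by auto
        show "G \<in> T"
        proof (rule ccontr)
          assume "G \<notin> T"
          have "\<not> (P \<inter> \<Inter>T \<subseteq> G)"
            by (rule simple_local[OF simple vert]) (use TF G vF \<open>G \<notin> T\<close> in \<open>auto simp: Fv_def\<close>)
          with G show False unfolding F_def by blast
        qed
      qed
    qed
    then show "\<exists>F\<in>L. T = \<psi> F" using FP vF memL by auto
  qed
  have bg: "bij_betw (image g) (Pow Fv) (Pow {0..<d})" by (rule bij_betw_Pow[OF g])
  have b: "bij_betw (image g \<circ> \<psi>) L (Pow {0..<d})" by (rule bij_betw_trans[OF bpsi bg])
  have injg: "inj_on g Fv" using g bij_betw_imp_inj_on by blast
  have "\<forall>F\<in>L. \<forall>G\<in>L. G \<subseteq> F \<longleftrightarrow> (image g \<circ> \<psi>) F \<subseteq> (image g \<circ> \<psi>) G"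
    using ord psiFv inj_on_image_subset_iff[OF injg] by simp
  then show ?thesis unfolding boolean_lattice_of_rank_def L_def[symmetric]
    using b by (intro exI[of _ "{0..<d}"] exI[of _ "image g \<circ> \<psi>"]) auto
qed



lemma hull_facet_form:
  fixes P :: "'a::euclidean_space set"
  assumes "finite V" "P = convex hull V" "F facet_of P"
  obtains a b where "P \<subseteq> {x. a \<bullet> x \<le> b}" "F = P \<inter> {x. a \<bullet> x = b}"
proof -
  have "polyhedron P" using assms polytope_imp_polyhedron polytope_convex_hull by blast
  then show ?thesis using facet_of_polyhedron assms(3) that by metis
qed

lemma face_vertex_in_V:
  fixes P :: "'a::euclidean_space set"
  assumes "finite V" "P = convex hull V" "C face_of P" "C \<noteq> {}"
  obtains p where "p \<in> V" "p \<in> C"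
proof -
  have "polytope P" using assms polytope_convex_hull by blast
  then obtain v where "{v} face_of P" "v \<in> C" using face_has_vertex assms by blast
  then have "v extreme_point_of P" using face_of_singleton by blast
  then have "v \<in> V" using extreme_point_of_convex_hull assms(2) by blast
  then show ?thesis using that \<open>v \<in> C\<close> by blast
qed

lemma indep_pairs:
  fixes P :: "'a::euclidean_space set"
  assumes "finite V" "P = convex hull V" "independent_facets P S" "3 \<le> card S" "F \<in> S" "G \<in> S"
  obtains p where "p \<in> V" "p \<in> P" "p \<in> F" "p \<in> G"
proof -
  have finS: "finite S" using assms(4) card_ge_0_finite by force
  have "card {F, G} \<le> 2" by (simp add: card_insert_if)
  then have "\<not> S \<subseteq> {F, G}" using assms(4) card_mono[of "{F,G}" S] by auto
  then obtain s where s: "s \<in> S" "s \<notin> {F, G}" by blast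
  have SF: "\<forall>F\<in>S. F facet_of P" and str: "face_join P S \<subset> face_join P (S - {s})"
    using assms(3) s unfolding independent_facets_def by auto
  have ne: "face_join P (S - {s}) \<noteq> {}" using str by blast
  have conv: "convex P" using assms(1,2) by (simp add: convex_convex_hull)
  have "face_join P (S - {s}) face_of P"
    using face_join_face[OF conv] SF facet_of_imp_face_of by blast
  then obtain p where "p \<in> V" "p \<in> face_join P (S - {s})"
    using face_vertex_in_V[OF assms(1,2)] ne by blast
  then show ?thesis using that s assms(5,6) unfolding face_join_def by blast
qed

lemma sum_swap:
  fixes g :: "'m::finite \<Rightarrow> 'm \<Rightarrow> 'b::ab_group_add"
  assumes "i \<noteq> j"
  shows "(\<Sum>k\<in>UNIV. g k (\<pi> (Transposition.transpose i j k)))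
       = (\<Sum>k\<in>UNIV. g k (\<pi> k)) - g i (\<pi> i) - g j (\<pi> j) + g i (\<pi> j) + g j (\<pi> i)"
proof -
  have split: "(\<Sum>k\<in>UNIV. h k) = h i + h j + (\<Sum>k\<in>UNIV - {i, j}. h k)" for h :: "'m \<Rightarrow> 'b"
  proof -
    have "(\<Sum>k\<in>UNIV. h k) = h i + (\<Sum>k\<in>UNIV - {i}. h k)" by (rule sum.remove) auto
    moreover have "(\<Sum>k\<in>UNIV - {i}. h k) = h j + (\<Sum>k\<in>UNIV - {i} - {j}. h k)"
      by (rule sum.remove) (use assms in auto)
    moreover have "UNIV - {i} - {j} = UNIV - {i, j}" by auto
    ultimately show ?thesis by (simp add: add.assoc)
  qed
  have rest: "(\<Sum>k\<in>UNIV - {i, j}. g k (\<pi> (Transposition.transpose i j k))) = (\<Sum>k\<in>UNIV - {i, j}. g k (\<pi> k))"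
    by (rule sum.cong) auto
  show ?thesis
    unfolding split[of "\<lambda>k. g k (\<pi> (Transposition.transpose i j k))"] split[of "\<lambda>k. g k (\<pi> k)"] rest
    using assms by (simp add: algebra_simps)
qed

lemma noinv_eq:
  fixes x y :: "'m::finite \<Rightarrow> int"
  assumes ix: "inj x" and iy: "inj y" and rg: "range x = range y"
    and mono: "\<And>i j. x i < x j \<Longrightarrow> y i < y j"
  shows "x = y"
proof (rule ccontr)
  assume "x \<noteq> y"
  define D where "D = {i. x i \<noteq> y i}"
  have Dne: "D \<noteq> {}" using \<open>x \<noteq> y\<close> unfolding D_def by auto
  define c where "c = Min ((\<lambda>i. min (x i) (y i)) ` D)"
  have cle: "c \<le> min (x i) (y i)" if "i \<in> D" for i
    unfolding c_def using that by (intro Min_le) auto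
  have "c \<in> (\<lambda>i. min (x i) (y i)) ` D" unfolding c_def using Dne by (intro Min_in) auto
  then obtain i0 where i0: "i0 \<in> D" "c = min (x i0) (y i0)" by blast
  have rev: "y i < y j \<Longrightarrow> x i < x j" for i j
  proof (rule ccontr)
    assume "y i < y j" "\<not> x i < x j"
    then have "i \<noteq> j" by auto
    then have "x i \<noteq> x j" using ix by (auto dest: injD)
    with \<open>\<not> x i < x j\<close> have "x j < x i" by simp
    then have "y j < y i" by (rule mono)
    with \<open>y i < y j\<close> show False by simp
  qed
  show False
  proof (cases "x i0 < y i0")
    case True
    then have c: "c = x i0" using i0 by simp
    have "x i0 \<in> range y" using rg by blast
    then obtain j where j: "y j = x i0" by auto
    then have "y j < y i0" using True by simp
    then have xj: "x j < x i0" by (rule rev)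
    show False
    proof (cases "j \<in> D")
      case True then show False using cle[of j] xj c by simp
    next
      case False then have "x j = y j" unfolding D_def by simp
      with j xj show False by simp
    qed
  next
    case False
    with i0 have ne: "x i0 \<noteq> y i0" unfolding D_def by simp
    with False have lt: "y i0 < x i0" by simp
    then have c: "c = y i0" using i0 by simp
    have "y i0 \<in> range x" using rg by blast
    then obtain j where j: "x j = y i0" by auto
    then have "x j < x i0" using lt by simp
    then have yj: "y j < y i0" by (rule mono)
    show False
    proof (cases "j \<in> D")
      case True then show False using cle[of j] yj c by simp
    next
      case False then have "x j = y j" unfolding D_def by simp
      with j yj show False by simp
    qed
  qed
qed



lemma inner_pt: "(a :: real^'n) \<bullet> (\<Sum>i\<in>UNIV. c i *\<^sub>R axis i 1) = (\<Sum>i\<in>UNIV. a $ i * c i)"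
  by (simp add: inner_sum_right inner_axis mult.commute)

lemma part4:
  fixes m :: "'m::finite \<Rightarrow> int"
  assumes injm: "inj m" and indep: "independent_facets (permutohedron m) S"
    and empty: "face_join (permutohedron m) S = {}"
  shows "card S \<le> 2"
proof (rule ccontr)
  assume "\<not> card S \<le> 2"
  then have c3: "3 \<le> card S" by simp
  have finS: "finite S" using c3 card_ge_0_finite by force
  define P where "P = permutohedron m"
  define pt where "pt \<pi> = (\<Sum>i\<in>UNIV. of_int (m (\<pi> i)) *\<^sub>R axis i 1 :: real^'m)" for \<pi> :: "'m \<Rightarrow> 'm"
  define Pm where "Pm = {\<pi> :: 'm \<Rightarrow> 'm. \<pi> permutes UNIV}"
  define V where "V = pt ` Pm"
  have finPm: "finite Pm" unfolding Pm_def by (rule finite_permutations) simp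
  have finV: "finite V" unfolding V_def using finPm by simp
  have PV: "P = convex hull V" unfolding P_def permutohedron_def V_def pt_def Pm_def
    by (rule arg_cong[where f="(hull) convex"]) auto
  have SF: "\<forall>F\<in>S. F facet_of P" using indep unfolding independent_facets_def P_def by blast
  have "\<forall>F\<in>S. \<exists>a b. P \<subseteq> {x. a \<bullet> x \<le> b} \<and> F = P \<inter> {x. a \<bullet> x = b}"
    using hull_facet_form[OF finV PV] SF by metis
  then obtain A B where AB: "\<And>F. F \<in> S \<Longrightarrow> P \<subseteq> {x. A F \<bullet> x \<le> B F} \<and> F = P \<inter> {x. A F \<bullet> x = B F}"
    by metis
  define val where "val F \<pi> = (\<Sum>k\<in>UNIV. A F $ k * of_int (m (\<pi> k)))" for F \<pi>
  have valpt: "A F \<bullet> pt \<pi> = val F \<pi>" for F \<pi> unfolding pt_def val_def by (rule inner_pt)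
  have ptP: "pt \<pi> \<in> P" if "\<pi> \<in> Pm" for \<pi>
    unfolding PV V_def using that by (intro hull_inc) blast
  have le: "val F \<pi> \<le> B F" if "F \<in> S" "\<pi> \<in> Pm" for F \<pi>
    using AB[OF that(1)] ptP[OF that(2)] valpt by force
  have inF: "pt \<pi> \<in> F \<longleftrightarrow> val F \<pi> = B F" if "F \<in> S" "\<pi> \<in> Pm" for F \<pi>
  proof -
    have eqF: "F = P \<inter> {x. A F \<bullet> x = B F}" using AB[OF that(1)] by blast
    have "pt \<pi> \<in> F \<longleftrightarrow> pt \<pi> \<in> P \<inter> {x. A F \<bullet> x = B F}"
      using eqF by (rule arg_cong[where f="\<lambda>X. pt \<pi> \<in> X"])
    then show ?thesis using ptP[OF that(2)] valpt[of F \<pi>] by simp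
  qed
  have swapPm: "\<pi> \<circ> Transposition.transpose i j \<in> Pm" if "\<pi> \<in> Pm" for \<pi> i j
    using that unfolding Pm_def by (auto intro!: permutes_compose permutes_swap_id)
  have valswap: "val F (\<pi> \<circ> Transposition.transpose i j) = val F \<pi> +
      (A F $ j - A F $ i) * (of_int (m (\<pi> i)) - of_int (m (\<pi> j)))" if "i \<noteq> j" for F \<pi> i j
    unfolding val_def comp_def
    by (subst sum_swap[OF that, where g = "\<lambda>k l. A F $ k * of_int (m l)"]) (simp add: algebra_simps)
  have minj: "m (\<pi> i) \<noteq> m (\<pi> j)" if "\<pi> \<in> Pm" "i \<noteq> j" for \<pi> i j
  proof
    assume "m (\<pi> i) = m (\<pi> j)"
    then have "\<pi> i = \<pi> j" using injm by (auto dest: injD)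
    moreover have "\<pi> permutes UNIV" using that(1) unfolding Pm_def by simp
    then have "inj \<pi>" by (rule permutes_inj)
    ultimately show False using that(2) by (auto dest: injD)
  qed
  have maxcompat: "m (\<pi> i) < m (\<pi> j)"
    if "F \<in> S" "\<pi> \<in> Pm" "val F \<pi> = B F" "A F $ i < A F $ j" for F \<pi> i j
  proof (rule ccontr)
    assume "\<not> m (\<pi> i) < m (\<pi> j)"
    moreover have "i \<noteq> j" using that(4) by auto
    ultimately have lt: "m (\<pi> j) < m (\<pi> i)" using minj[OF that(2)] by force
    have "val F (\<pi> \<circ> Transposition.transpose i j) > val F \<pi>"
      unfolding valswap[OF \<open>i \<noteq> j\<close>] using that(4) lt by (simp add: mult_pos_pos)
    with le[OF that(1) swapPm[OF that(2), of i j]] that(3) show False by simp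
  qed
  have pairs: "\<not> (A F $ i < A F $ j \<and> A G $ j < A G $ i)" if FGS: "F \<in> S" "G \<in> S" for F G i j
  proof
    assume h: "A F $ i < A F $ j \<and> A G $ j < A G $ i"
    obtain p where "p \<in> V" "p \<in> F" "p \<in> G" using indep_pairs[OF finV PV indep[folded P_def] c3 FGS] by blast
    then obtain \<pi> where \<pi>: "\<pi> \<in> Pm" "p = pt \<pi>" unfolding V_def by blast
    have "val F \<pi> = B F" "val G \<pi> = B G" using inF FGS \<pi> \<open>p \<in> F\<close> \<open>p \<in> G\<close> by auto
    then have "m (\<pi> i) < m (\<pi> j)" "m (\<pi> j) < m (\<pi> i)"
      using maxcompat[OF FGS(1) \<pi>(1)] maxcompat[OF FGS(2) \<pi>(1)] h by auto
    then show False by simp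
  qed
  define \<Psi> where "\<Psi> \<sigma> = (\<Sum>G\<in>S. val G \<sigma>)" for \<sigma>
  have Pmne: "Pm \<noteq> {}" unfolding Pm_def using permutes_id by blast
  obtain \<sigma> where \<sigma>Pm: "\<sigma> \<in> Pm" and \<sigma>max: "\<And>\<pi>. \<pi> \<in> Pm \<Longrightarrow> \<Psi> \<pi> \<le> \<Psi> \<sigma>"
  proof -
    have "Max (\<Psi> ` Pm) \<in> \<Psi> ` Pm" using finPm Pmne by (intro Max_in) auto
    then obtain \<sigma> where "\<sigma> \<in> Pm" "\<Psi> \<sigma> = Max (\<Psi> ` Pm)" by auto
    moreover have "\<Psi> \<pi> \<le> Max (\<Psi> ` Pm)" if "\<pi> \<in> Pm" for \<pi> using finPm that by (intro Max_ge) auto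
    ultimately show ?thesis using that by metis
  qed
  have compat: "m (\<sigma> i) < m (\<sigma> j)" if "F \<in> S" "A F $ i < A F $ j" for F i j
  proof (rule ccontr)
    assume "\<not> m (\<sigma> i) < m (\<sigma> j)"
    moreover have "i \<noteq> j" using that(2) by auto
    ultimately have lt: "m (\<sigma> j) < m (\<sigma> i)" using minj[OF \<sigma>Pm] by force
    have "\<Psi> \<sigma> < \<Psi> (\<sigma> \<circ> Transposition.transpose i j)"
      unfolding \<Psi>_def
    proof (rule sum_strict_mono_ex1[OF finS])
      show "\<forall>G\<in>S. val G \<sigma> \<le> val G (\<sigma> \<circ> Transposition.transpose i j)"
      proof
        fix G assume "G \<in> S"
        then have "A G $ i \<le> A G $ j" using pairs[OF that(1)] that(2) by force
        then show "val G \<sigma> \<le> val G (\<sigma> \<circ> Transposition.transpose i j)"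
          unfolding valswap[OF \<open>i \<noteq> j\<close>] using lt by simp
      qed
      show "\<exists>G\<in>S. val G \<sigma> < val G (\<sigma> \<circ> Transposition.transpose i j)"
        using that lt unfolding valswap[OF \<open>i \<noteq> j\<close>] by (intro bexI[of _ F]) (auto simp: mult_pos_pos)
    qed
    with \<sigma>max[OF swapPm[OF \<sigma>Pm, of i j]] show False by simp
  qed
  have \<sigma>F: "pt \<sigma> \<in> F" if FS: "F \<in> S" for F
  proof -
    obtain p where "p \<in> V" "p \<in> F" using indep_pairs[OF finV PV indep[folded P_def] c3 FS FS] by blast
    then obtain \<pi>0 where \<pi>0: "\<pi>0 \<in> Pm" "val F \<pi>0 = B F" unfolding V_def using inF[OF FS] by blast
    define Q where "Q = {\<pi>\<in>Pm. val F \<pi>0 \<le> val F \<pi>}"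
    define \<Phi> where "\<Phi> \<pi> = (\<Sum>k\<in>UNIV. m (\<pi> k) * m (\<sigma> k))" for \<pi>
    have finQ: "finite Q" using finPm unfolding Q_def by simp
    have Qne: "\<pi>0 \<in> Q" unfolding Q_def using \<pi>0 by simp
    obtain \<pi> where \<pi>Q: "\<pi> \<in> Q" and \<pi>max: "\<And>\<rho>. \<rho> \<in> Q \<Longrightarrow> \<Phi> \<rho> \<le> \<Phi> \<pi>"
    proof -
      have "Max (\<Phi> ` Q) \<in> \<Phi> ` Q" using finQ Qne by (intro Max_in) auto
      then obtain \<pi> where "\<pi> \<in> Q" "\<Phi> \<pi> = Max (\<Phi> ` Q)" by auto
      moreover have "\<Phi> \<rho> \<le> Max (\<Phi> ` Q)" if "\<rho> \<in> Q" for \<rho> using finQ that by (intro Max_ge) auto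
      ultimately show ?thesis using that by metis
    qed
    have \<pi>Pm: "\<pi> \<in> Pm" using \<pi>Q unfolding Q_def by blast
    have noinv: "m (\<pi> i) < m (\<pi> j)" if "m (\<sigma> i) < m (\<sigma> j)" for i j
    proof (rule ccontr)
      assume "\<not> m (\<pi> i) < m (\<pi> j)"
      moreover have "i \<noteq> j" using that by auto
      ultimately have lt: "m (\<pi> j) < m (\<pi> i)" using minj[OF \<pi>Pm] by force
      have "\<not> A F $ j < A F $ i" using compat[OF FS, of j i] that by auto
      then have aij: "A F $ i \<le> A F $ j" by simp
      have "val F \<pi> \<le> val F (\<pi> \<circ> Transposition.transpose i j)"
        unfolding valswap[OF \<open>i \<noteq> j\<close>] using lt aij by simp
      then have inQ: "\<pi> \<circ> Transposition.transpose i j \<in> Q"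
        using \<pi>Q swapPm[OF \<pi>Pm, of i j] unfolding Q_def by auto
      have "\<Phi> (\<pi> \<circ> Transposition.transpose i j) = \<Phi> \<pi> + (m (\<pi> i) - m (\<pi> j)) * (m (\<sigma> j) - m (\<sigma> i))"
        unfolding \<Phi>_def comp_def
        by (subst sum_swap[OF \<open>i \<noteq> j\<close>, where g = "\<lambda>k l. m l * m (\<sigma> k)"]) (simp add: algebra_simps)
      moreover have "(m (\<pi> i) - m (\<pi> j)) * (m (\<sigma> j) - m (\<sigma> i)) > 0" using lt that by (simp add: mult_pos_pos)
      ultimately show False using \<pi>max[OF inQ] by simp
    qed
    have "(m \<circ> \<sigma>) = (m \<circ> \<pi>)"
    proof (rule noinv_eq)
      have ps: "\<sigma> permutes UNIV" "\<pi> permutes UNIV" using \<sigma>Pm \<pi>Pm unfolding Pm_def by auto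
      have "inj \<sigma>" "inj \<pi>" using permutes_inj[OF ps(1)] permutes_inj[OF ps(2)] by auto
      then show "inj (m \<circ> \<sigma>)" "inj (m \<circ> \<pi>)" using injm by (auto intro: inj_compose)
      have "surj \<sigma>" "surj \<pi>" using permutes_surj[OF ps(1)] permutes_surj[OF ps(2)] by auto
      then show "range (m \<circ> \<sigma>) = range (m \<circ> \<pi>)" by (metis image_comp)
      show "(m \<circ> \<pi>) i < (m \<circ> \<pi>) j" if "(m \<circ> \<sigma>) i < (m \<circ> \<sigma>) j" for i j
        using noinv that by simp
    qed
    then have eqk: "m (\<sigma> k) = m (\<pi> k)" for k by (metis comp_apply)
    have "val F \<sigma> = val F \<pi>" unfolding val_def using eqk by simp
    moreover have "val F \<pi>0 \<le> val F \<pi>" using \<pi>Q unfolding Q_def by blast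
    ultimately have "val F \<sigma> = B F" using \<pi>0(2) le[OF FS \<sigma>Pm] by simp
    then show ?thesis using inF[OF FS \<sigma>Pm] by simp
  qed
  have "pt \<sigma> \<in> face_join P S" unfolding face_join_def using ptP[OF \<sigma>Pm] \<sigma>F by blast
  with empty show False unfolding P_def by simp
qed



lemma inner_pt': "(a :: real^'n) \<bullet> (\<Sum>i\<in>UNIV. c i *\<^sub>R axis i 1) = (\<Sum>i\<in>UNIV. a $ i * c i)"
  by (simp add: inner_sum_right inner_axis mult.commute)

lemma sum_upd_mult:
  fixes f g :: "'n::finite \<Rightarrow> real"
  shows "(\<Sum>k\<in>UNIV. f k * (g(i := c)) k) = (\<Sum>k\<in>UNIV. f k * g k) + f i * (c - g i)"
proof -
  have split: "(\<Sum>k\<in>UNIV. h k) = h i + (\<Sum>k\<in>UNIV - {i}. h k)" for h :: "'n \<Rightarrow> real"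
    by (rule sum.remove) auto
  have "(\<Sum>k\<in>UNIV - {i}. f k * (g(i := c)) k) = (\<Sum>k\<in>UNIV - {i}. f k * g k)"
    by (rule sum.cong) auto
  then show ?thesis
    unfolding split[of "\<lambda>k. f k * (g(i := c)) k"] split[of "\<lambda>k. f k * g k"]
    by (simp add: algebra_simps)
qed

lemma part3:
  assumes indep: "independent_facets (cube :: (real^'n) set) S"
    and empty: "face_join cube S = {}"
  shows "card S \<le> 2"
proof (rule ccontr)
  assume "\<not> card S \<le> 2"
  then have c3: "3 \<le> card S" by simp
  define P where "P = (cube :: (real^'n) set)"
  define pt where "pt \<epsilon> = (\<Sum>i\<in>UNIV. \<epsilon> i *\<^sub>R axis i 1 :: real^'n)" for \<epsilon> :: "'n \<Rightarrow> real"
  define Eps where "Eps = {\<epsilon> :: 'n \<Rightarrow> real. \<forall>i. \<epsilon> i = 1 \<or> \<epsilon> i = -1}"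
  define V where "V = pt ` Eps"
  have finEps: "finite Eps"
  proof (rule finite_subset)
    show "Eps \<subseteq> PiE (UNIV::'n set) (\<lambda>_. {1, -1::real})" unfolding Eps_def by (auto simp: PiE_UNIV_domain)
    show "finite (PiE (UNIV::'n set) (\<lambda>_. {1, -1::real}))" by (rule finite_PiE) auto
  qed
  have finV: "finite V" unfolding V_def using finEps by simp
  have PV: "P = convex hull V" unfolding P_def cube_def V_def pt_def Eps_def
    by (rule arg_cong[where f="(hull) convex"]) auto
  have SF: "\<forall>F\<in>S. F facet_of P" using indep unfolding independent_facets_def P_def by blast
  have "\<forall>F\<in>S. \<exists>a b. P \<subseteq> {x. a \<bullet> x \<le> b} \<and> F = P \<inter> {x. a \<bullet> x = b}"
    using hull_facet_form[OF finV PV] SF by metis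
  then obtain A B where AB: "\<And>F. F \<in> S \<Longrightarrow> P \<subseteq> {x. A F \<bullet> x \<le> B F} \<and> F = P \<inter> {x. A F \<bullet> x = B F}"
    by metis
  define val where "val F \<epsilon> = (\<Sum>k\<in>UNIV. A F $ k * \<epsilon> k)" for F \<epsilon>
  have valpt: "A F \<bullet> pt \<epsilon> = val F \<epsilon>" for F \<epsilon> unfolding pt_def val_def by (rule inner_pt')
  have ptP: "pt \<epsilon> \<in> P" if "\<epsilon> \<in> Eps" for \<epsilon>
    unfolding PV V_def using that by (intro hull_inc) blast
  have le: "val F \<epsilon> \<le> B F" if "F \<in> S" "\<epsilon> \<in> Eps" for F \<epsilon>
    using AB[OF that(1)] ptP[OF that(2)] valpt by force
  have inF: "pt \<epsilon> \<in> F \<longleftrightarrow> val F \<epsilon> = B F" if "F \<in> S" "\<epsilon> \<in> Eps" for F \<epsilon>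
  proof -
    have eqF: "F = P \<inter> {x. A F \<bullet> x = B F}" using AB[OF that(1)] by blast
    have "pt \<epsilon> \<in> F \<longleftrightarrow> pt \<epsilon> \<in> P \<inter> {x. A F \<bullet> x = B F}"
      using eqF by (rule arg_cong[where f="\<lambda>X. pt \<epsilon> \<in> X"])
    then show ?thesis using ptP[OF that(2)] valpt[of F \<epsilon>] by simp
  qed
  have flip: "\<epsilon>(i := - \<epsilon> i) \<in> Eps" if "\<epsilon> \<in> Eps" for \<epsilon> i
    using that unfolding Eps_def by auto
  have valflip: "val F (\<epsilon>(i := - \<epsilon> i)) = val F \<epsilon> - 2 * A F $ i * \<epsilon> i" for F \<epsilon> i
    unfolding val_def sum_upd_mult by simp
  have maxpos: "\<epsilon> i = 1" if "F \<in> S" "\<epsilon> \<in> Eps" "val F \<epsilon> = B F" "A F $ i > 0" for F \<epsilon> i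
  proof (rule ccontr)
    assume "\<epsilon> i \<noteq> 1"
    then have "\<epsilon> i = -1" using that(2) unfolding Eps_def by auto
    then have "val F (\<epsilon>(i := - \<epsilon> i)) > B F" using valflip[of F \<epsilon> i] that(3,4) by simp
    with le[OF that(1) flip[OF that(2), of i]] show False by simp
  qed
  have maxneg: "\<epsilon> i = -1" if "F \<in> S" "\<epsilon> \<in> Eps" "val F \<epsilon> = B F" "A F $ i < 0" for F \<epsilon> i
  proof (rule ccontr)
    assume "\<epsilon> i \<noteq> -1"
    then have "\<epsilon> i = 1" using that(2) unfolding Eps_def by auto
    then have "val F (\<epsilon>(i := - \<epsilon> i)) > B F" using valflip[of F \<epsilon> i] that(3,4) by simp
    with le[OF that(1) flip[OF that(2), of i]] show False by simp
  qed
  have pairs: "\<not> (A F $ i > 0 \<and> A G $ i < 0)" if FGS: "F \<in> S" "G \<in> S" for F G i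
  proof
    assume h: "A F $ i > 0 \<and> A G $ i < 0"
    obtain p where "p \<in> V" "p \<in> F" "p \<in> G" using indep_pairs[OF finV PV indep[folded P_def] c3 FGS] by blast
    then obtain \<epsilon> where \<epsilon>: "\<epsilon> \<in> Eps" "p = pt \<epsilon>" unfolding V_def by blast
    have vF: "val F \<epsilon> = B F" and vG: "val G \<epsilon> = B G" using inF FGS \<epsilon> \<open>p \<in> F\<close> \<open>p \<in> G\<close> by auto
    have "\<epsilon> i = 1" using maxpos[OF FGS(1) \<epsilon>(1) vF] h by blast
    moreover have "\<epsilon> i = -1" using maxneg[OF FGS(2) \<epsilon>(1) vG] h by blast
    ultimately show False by simp
  qed
  define e where "e i = (if \<exists>F\<in>S. A F $ i > 0 then 1 else -1 :: real)" for i
  have eE: "e \<in> Eps" unfolding Eps_def e_def by auto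
  have eF: "pt e \<in> F" if FS: "F \<in> S" for F
  proof -
    obtain p where "p \<in> V" "p \<in> F" using indep_pairs[OF finV PV indep[folded P_def] c3 FS FS] by blast
    then obtain \<epsilon> where \<epsilon>: "\<epsilon> \<in> Eps" "val F \<epsilon> = B F" unfolding V_def using inF[OF FS] by blast
    have "A F $ k * \<epsilon> k \<le> A F $ k * e k" for k
    proof -
      have ek: "\<epsilon> k = 1 \<or> \<epsilon> k = -1" using \<epsilon>(1) unfolding Eps_def by auto
      consider "A F $ k > 0" | "A F $ k < 0" | "A F $ k = 0" by linarith
      then show ?thesis
      proof cases
        case 1 then have "e k = 1" unfolding e_def using FS by auto
        then show ?thesis using 1 ek by auto
      next
        case 2 then have "e k = -1" unfolding e_def using pairs[OF _ FS] by force
        then show ?thesis using 2 ek by auto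
      qed simp
    qed
    then have "val F \<epsilon> \<le> val F e" unfolding val_def by (intro sum_mono) auto
    then have "val F e = B F" using \<epsilon>(2) le[OF FS eE] by simp
    then show ?thesis using inF[OF FS eE] by simp
  qed
  have "pt e \<in> face_join P S" unfolding face_join_def using ptP[OF eE] eF by blast
  with empty show False unfolding P_def by simp
qed


theorem proposition3:
  shows "(\<forall>(P::'a::euclidean_space set) d v.
            simple_polytope d P \<and> {v} face_of P \<longrightarrow>
              boolean_lattice_of_rank (face_interval P v) d)
       \<and> (\<forall>(P::'a set) d S.
            simple_polytope d P \<and> (\<forall>F\<in>S. F facet_of P) \<and> face_join P S \<noteq> {} \<longrightarrow>
              independent_facets P S)
       \<and> (\<forall>S. independent_facets (cube :: (real^'n) set) S \<and> face_join cube S = {} \<longrightarrow>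
              card S \<le> 2)
       \<and> (\<forall>(m :: 'm::finite \<Rightarrow> int) S. inj m \<and> (\<forall>i. 0 \<le> m i) \<and>
            independent_facets (permutohedron m) S \<and> face_join (permutohedron m) S = {} \<longrightarrow>
              card S \<le> 2)"
proof (intro conjI allI impI)
  fix P :: "'a set" and d v assume "simple_polytope d P \<and> {v} face_of P"
  then show "boolean_lattice_of_rank (face_interval P v) d" using part1 by blast
next
  fix P :: "'a set" and d S assume "simple_polytope d P \<and> (\<forall>F\<in>S. F facet_of P) \<and> face_join P S \<noteq> {}"
  then show "independent_facets P S" using part2 by blast
next
  fix S assume "independent_facets (cube :: (real^'n) set) S \<and> face_join cube S = {}"
  then show "card S \<le> 2" using part3 by blast
next
  fix m :: "'m \<Rightarrow> int" and S
  assume "inj m \<and> (\<forall>i. 0 \<le> m i) \<and> independent_facets (permutohedron m) S \<and> face_join (permutohedron m) S = {}"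
  then show "card S \<le> 2" using part4 by blast
qed

end
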